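(* Let $q=2^n$, let $B$ be a $k$-subset of $\mathrm{GF}(q)$ with $k\ge3$, and let $\mathcal B=\mathrm{GA}_1(q)(B)$. Let $E$ be a subset of $\mathrm{GF}(q)$ such that $\hat f_B(\mu)=\hat f_E(\mu^d)$ for all $\mu\in\mathrm{GF}(q)$, where $\gcd(d,q-1)=1$. Then the following are equivalent: (1) $(\mathrm{GF}(q),\mathcal B)$ is a $3$-design; (2) $\sum_{x,y\in\mathrm{GF}(q)}(-1)^{f_E(x)+f_E(y)+f_E(u^dx+(1+u)^dy)}$ is independent of $u\in\mathrm{GF}(q)\setminus\mathrm{GF}(2)$; (3) $\sum_{\alpha\in\mathrm{GF}(q)}\hat f_E(\alpha)\hat f_E(u^d\alpha)\hat f_E((1+u)^d\alpha)$ is independent of $u\in\mathrm{GF}(q)\setminus\mathrm{GF}(2)$; (4) $N_E(u^d,(1+u)^d,1)$ is independent of $u\in\mathrm{GF}(q)\setminus\mathrm{GF}(2)$.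
   Context: $\mathrm{Tr}$ is the absolute trace $\mathrm{GF}(2^n)\to\mathrm{GF}(2)$. For $S\subseteq\mathrm{GF}(q)$, $f_S$ is its characteristic function as a Boolean function, and $\hat f(\mu)=\sum_{x\in\mathrm{GF}(2^n)}(-1)^{f(x)+\mathrm{Tr}(\mu x)}$ is the Walsh transform. $N_S(a,b,c)$ is the number of triples $(x,y,z)\in S^3$ with $ax+by+cz=0$. $\mathrm{GA}_1(q)$ is the group of permutations $x\mapsto ax+b$ of $\mathrm{GF}(q)$ with $a\ne0$; $\mathrm{GA}_1(q)(B)=\{\pi(B):\pi\in\mathrm{GA}_1(q)\}$. A pair $(\mathcal P,\mathcal B)$ with $\mathcal B$ a set of $k$-subsets of $\mathcal P$ is a $3$-design if every $3$-subset of $\mathcal P$ lies in exactly $\lambda$ members of $\mathcal B$ for some constant $\lambda$. *)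

theory Defs
  imports Main
begin

text \<open>GF(2^n) is modelled as an arbitrary finite field type 'a with CARD('a) = 2^n
  (hence of characteristic 2).\<close>

definition abs_trace :: "nat \<Rightarrow> 'a::field \<Rightarrow> 'a" where
  "abs_trace n x = (\<Sum>i<n. x ^ (2 ^ i))"

text \<open>(-1)^t for t an element of the prime field GF(2) = {0,1}.\<close>
definition sgn_gf2 :: "'a::field \<Rightarrow> int" where
  "sgn_gf2 t = (if t = 0 then 1 else -1)"

definition charf :: "'a set \<Rightarrow> 'a \<Rightarrow> nat" where
  "charf S x = (if x \<in> S then 1 else 0)"

definition walsh :: "nat \<Rightarrow> ('a::{field,finite}) set \<Rightarrow> 'a \<Rightarrow> int" where
  "walsh n S \<mu> = (\<Sum>x\<in>UNIV. (-1) ^ charf S x * sgn_gf2 (abs_trace n (\<mu> * x)))"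

definition N_count :: "('a::{field,finite}) set \<Rightarrow> 'a \<Rightarrow> 'a \<Rightarrow> 'a \<Rightarrow> nat" where
  "N_count S a b c = card {(x, y, z). x \<in> S \<and> y \<in> S \<and> z \<in> S \<and> a * x + b * y + c * z = 0}"

definition GA1_orbit :: "('a::field) set \<Rightarrow> 'a set set" where
  "GA1_orbit B = {(\<lambda>x. a * x + b) ` B | a b. a \<noteq> 0}"

definition is_3_design :: "'a set \<Rightarrow> 'a set set \<Rightarrow> bool" where
  "is_3_design P Bs \<longleftrightarrow> (\<exists>lam::nat. \<forall>T. T \<subseteq> P \<and> card T = 3 \<longrightarrow>
       card {Bl \<in> Bs. T \<subseteq> Bl} = lam)"

end

theory Submission
  imports Defs "HOL-Number_Theory.Residues" "HOL-Computational_Algebra.Polynomial"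
begin

lemma int_card_filter2:
  assumes "finite A"
  shows "int (card {p\<in>A. Q p}) = (\<Sum>p\<in>A. if Q p then 1 else 0)"
  using assms by (simp add: sum.If_cases Int_def)


definition img :: "('a::field \<times> 'a) \<Rightarrow> 'a set \<Rightarrow> 'a set" where
  "img p B = (\<lambda>x. fst p * x + snd p) ` B"

lemma orbit_eq: "GA1_orbit B = (\<lambda>p. img p B) ` {p. fst p \<noteq> 0}"
proof (rule equalityI)
  show "GA1_orbit B \<subseteq> (\<lambda>p. img p B) ` {p. fst p \<noteq> 0}"
  proof
    fix X assume "X \<in> GA1_orbit B"
    then obtain a b where ab: "a \<noteq> 0" "X = (\<lambda>x. a * x + b) ` B" unfolding GA1_orbit_def by blast
    show "X \<in> (\<lambda>p. img p B) ` {p. fst p \<noteq> 0}"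
      by (rule image_eqI[where x = "(a, b)"]) (use ab in \<open>auto simp: img_def\<close>)
  qed
  show "(\<lambda>p. img p B) ` {p. fst p \<noteq> 0} \<subseteq> GA1_orbit B"
  proof
    fix X assume "X \<in> (\<lambda>p. img p B) ` {p. fst p \<noteq> 0}"
    then obtain p where "fst p \<noteq> 0" "X = (\<lambda>x. fst p * x + snd p) ` B" unfolding img_def by blast
    then show "X \<in> GA1_orbit B" unfolding GA1_orbit_def by blast
  qed
qed

lemma mem_img:
  assumes "a \<noteq> (0::'a::field)"
  shows "t \<in> img (a, b) B \<longleftrightarrow> (t - b) / a \<in> B"
proof
  assume "t \<in> img (a, b) B"
  then obtain x where "x \<in> B" "t = a * x + b" unfolding img_def by auto
  then show "(t - b) / a \<in> B" using assms by simp
next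
  assume h: "(t - b) / a \<in> B"
  have e: "t = a * ((t - b) / a) + b" using assms by simp
  show "t \<in> img (a, b) B" unfolding img_def fst_conv snd_conv
    by (rule image_eqI[where f = "\<lambda>x. a * x + b" and x = "(t - b) / a"], rule e, rule h)
qed

lemma fiber_card:
  fixes B :: "'a::{field,finite} set"
  assumes p0: "fst p0 \<noteq> 0"
  shows "card {p. fst p \<noteq> 0 \<and> img p B = img p0 B} = card {p. fst p \<noteq> 0 \<and> img p B = B}"
proof -
  obtain a0 b0 where p0e: "p0 = (a0, b0)" by (cases p0)
  have a0: "a0 \<noteq> 0" using p0 p0e by simp
  define f where "f = (\<lambda>p::'a \<times> 'a. (a0 * fst p, a0 * snd p + b0))"
  define f' where "f' = (\<lambda>p::'a \<times> 'a. (fst p / a0, (snd p - b0) / a0))"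
  have imgf: "img (f p) B = (\<lambda>y. a0 * y + b0) ` img p B" for p
    unfolding img_def f_def image_image by (simp add: algebra_simps)
  have imgf': "img (f' p) B = (\<lambda>y. (y - b0) / a0) ` img p B" for p
    unfolding img_def f'_def image_image using a0 by (intro image_cong refl) (simp add: field_simps)
  have inv: "(\<lambda>y. (y - b0) / a0) ` (\<lambda>y. a0 * y + b0) ` B = B"
    unfolding image_image using a0 by simp
  have "bij_betw f {p. fst p \<noteq> 0 \<and> img p B = B} {p. fst p \<noteq> 0 \<and> img p B = img p0 B}"
  proof (rule bij_betw_byWitness[where f' = f'])
    show "\<forall>a\<in>{p. fst p \<noteq> 0 \<and> img p B = B}. f' (f a) = a"
      unfolding f_def f'_def using a0 by auto
    show "\<forall>a\<in>{p. fst p \<noteq> 0 \<and> img p B = img p0 B}. f (f' a) = a"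
      unfolding f_def f'_def using a0 by auto
    show "f ` {p. fst p \<noteq> 0 \<and> img p B = B} \<subseteq> {p. fst p \<noteq> 0 \<and> img p B = img p0 B}"
      using a0 by (auto simp: imgf p0e img_def[of "(a0, b0)"] simp del: img_def) (auto simp: f_def)
    show "f' ` {p. fst p \<noteq> 0 \<and> img p B = img p0 B} \<subseteq> {p. fst p \<noteq> 0 \<and> img p B = B}"
    proof
      fix p assume "p \<in> f' ` {p. fst p \<noteq> 0 \<and> img p B = img p0 B}"
      then obtain p' where p': "fst p' \<noteq> 0" "img p' B = img p0 B" "p = f' p'" by auto
      have "img p0 B = (\<lambda>y. a0 * y + b0) ` B" unfolding p0e img_def by simp
      then have "img p B = B" using p' imgf' inv by simp
      moreover have "fst p \<noteq> 0" using p' a0 by (simp add: f'_def)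
      ultimately show "p \<in> {p. fst p \<noteq> 0 \<and> img p B = B}" by simp
    qed
  qed
  then show ?thesis by (simp add: bij_betw_same_card)
qed

lemma M_eq:
  fixes B :: "'a::{field,finite} set"
  shows "card {p. fst p \<noteq> 0 \<and> T \<subseteq> img p B}
       = card {Bl \<in> GA1_orbit B. T \<subseteq> Bl} * card {p. fst p \<noteq> 0 \<and> img p B = B}"
proof -
  let ?I = "{Bl \<in> GA1_orbit B. T \<subseteq> Bl}"
  let ?F = "\<lambda>Bl. {p. fst p \<noteq> 0 \<and> img p B = Bl}"
  have U: "{p. fst p \<noteq> 0 \<and> T \<subseteq> img p B} = (\<Union>Bl\<in>?I. ?F Bl)"
    unfolding orbit_eq by auto
  have "card (\<Union>Bl\<in>?I. ?F Bl) = (\<Sum>Bl\<in>?I. card (?F Bl))"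
    by (rule card_UN_disjoint) auto
  also have "\<dots> = (\<Sum>Bl\<in>?I. card {p. fst p \<noteq> 0 \<and> img p B = B})"
  proof (intro sum.cong refl)
    fix Bl assume "Bl \<in> ?I"
    then obtain p0 where "fst p0 \<noteq> 0" "Bl = img p0 B" unfolding orbit_eq by auto
    then show "card (?F Bl) = card {p. fst p \<noteq> 0 \<and> img p B = B}"
      using fiber_card by blast
  qed
  finally show ?thesis using U by simp
qed

lemma M_count:
  fixes B :: "'a::{field,finite} set"
  assumes d01: "t0 \<noteq> t1" and d02: "t0 \<noteq> t2" and d12: "t1 \<noteq> t2"
  shows "card {p. fst p \<noteq> 0 \<and> {t0, t1, t2} \<subseteq> img p B}
       = card {(x, y). x \<in> B \<and> y \<in> B \<and> x \<noteq> y \<and> x + ((t2 - t0) / (t1 - t0)) * (y - x) \<in> B}"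
proof -
  let ?r = "(t2 - t0) / (t1 - t0)"
  define f where "f = (\<lambda>p::'a \<times> 'a. ((t0 - snd p) / fst p, (t1 - snd p) / fst p))"
  define f' where "f' = (\<lambda>q::'a \<times> 'a. ((t1 - t0) / (snd q - fst q), t0 - (t1 - t0) / (snd q - fst q) * fst q))"
  have t10: "t1 - t0 \<noteq> 0" using d01 by simp
  have memc: "{t0, t1, t2} \<subseteq> img (a, b) B \<longleftrightarrow> (t0 - b) / a \<in> B \<and> (t1 - b) / a \<in> B \<and> (t2 - b) / a \<in> B"
    if "a \<noteq> 0" for a b using mem_img[OF that] by auto
  have "bij_betw f {p. fst p \<noteq> 0 \<and> {t0, t1, t2} \<subseteq> img p B}
     {(x, y). x \<in> B \<and> y \<in> B \<and> x \<noteq> y \<and> x + ?r * (y - x) \<in> B}"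
  proof (rule bij_betw_byWitness[where f' = f'])
    show "\<forall>p\<in>{p. fst p \<noteq> 0 \<and> {t0, t1, t2} \<subseteq> img p B}. f' (f p) = p"
    proof
      fix p assume "p \<in> {p. fst p \<noteq> 0 \<and> {t0, t1, t2} \<subseteq> img p B}"
      then have a0: "fst p \<noteq> 0" by simp
      obtain a b where p: "p = (a, b)" by (cases p)
      have a: "a \<noteq> 0" using a0 p by simp
      have e1: "(t1 - b) / a - (t0 - b) / a = (t1 - t0) / a" by (simp add: diff_divide_distrib)
      have e2: "(t1 - t0) / ((t1 - t0) / a) = a" using a t10 by simp
      show "f' (f p) = p" unfolding f_def f'_def p using a t10 by (simp add: e1 e2)
    qed
    show "\<forall>q\<in>{(x, y). x \<in> B \<and> y \<in> B \<and> x \<noteq> y \<and> x + ?r * (y - x) \<in> B}. f (f' q) = q"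
    proof
      fix q assume "q \<in> {(x, y). x \<in> B \<and> y \<in> B \<and> x \<noteq> y \<and> x + ?r * (y - x) \<in> B}"
      then obtain x y where q: "q = (x, y)" and xy: "x \<noteq> y" by auto
      have yx: "y - x \<noteq> 0" using xy by simp
      define a where "a = (t1 - t0) / (y - x)"
      have a0: "a \<noteq> 0" unfolding a_def using yx t10 by simp
      have c0: "(t0 - (t0 - a * x)) / a = x" using a0 by simp
      have "(t1 - (t0 - a * x)) / a = ((t1 - t0) + a * x) / a" by (simp add: algebra_simps)
      also have "\<dots> = (t1 - t0) / a + x" using a0 by (simp add: add_divide_distrib)
      also have "(t1 - t0) / a = y - x" unfolding a_def using yx t10 by simp
      finally have c1: "(t1 - (t0 - a * x)) / a = y" by simp
      show "f (f' q) = q" unfolding f_def f'_def q using c0 c1 by (simp add: a_def)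
    qed
    show "f ` {p. fst p \<noteq> 0 \<and> {t0, t1, t2} \<subseteq> img p B} \<subseteq> {(x, y). x \<in> B \<and> y \<in> B \<and> x \<noteq> y \<and> x + ?r * (y - x) \<in> B}"
    proof
      fix z assume "z \<in> f ` {p. fst p \<noteq> 0 \<and> {t0, t1, t2} \<subseteq> img p B}"
      then obtain a b where ab: "a \<noteq> 0" "{t0, t1, t2} \<subseteq> img (a, b) B" "z = f (a, b)" by auto
      have m: "(t0 - b) / a \<in> B" "(t1 - b) / a \<in> B" "(t2 - b) / a \<in> B" using memc[OF ab(1)] ab(2) by auto
      have ne: "(t0 - b) / a \<noteq> (t1 - b) / a" using ab(1) d01 by (simp add: divide_cancel_right)
      have th: "(t0 - b) / a + ?r * ((t1 - b) / a - (t0 - b) / a) = (t2 - b) / a"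
        using ab(1) t10 by (simp add: field_simps)
      show "z \<in> {(x, y). x \<in> B \<and> y \<in> B \<and> x \<noteq> y \<and> x + ?r * (y - x) \<in> B}"
        unfolding ab(3) f_def using m ne th by simp
    qed
    show "f' ` {(x, y). x \<in> B \<and> y \<in> B \<and> x \<noteq> y \<and> x + ?r * (y - x) \<in> B} \<subseteq> {p. fst p \<noteq> 0 \<and> {t0, t1, t2} \<subseteq> img p B}"
    proof
      fix z assume "z \<in> f' ` {(x, y). x \<in> B \<and> y \<in> B \<and> x \<noteq> y \<and> x + ?r * (y - x) \<in> B}"
      then obtain x y where xy: "x \<in> B" "y \<in> B" "x \<noteq> y" "x + ?r * (y - x) \<in> B" and z: "z = f' (x, y)" by auto
      define a where "a = (t1 - t0) / (y - x)"
      define b where "b = t0 - a * x"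
      have yx: "y - x \<noteq> 0" using xy by simp
      have a0: "a \<noteq> 0" unfolding a_def using yx t10 by simp
      have za: "z = (a, b)" unfolding z f'_def a_def b_def by simp
      have c0: "(t0 - b) / a = x" unfolding b_def using a0 by simp
      have "(t1 - b) / a = ((t1 - t0) + a * x) / a" unfolding b_def by (simp add: algebra_simps)
      also have "\<dots> = (t1 - t0) / a + x" using a0 by (simp add: add_divide_distrib)
      also have "(t1 - t0) / a = y - x" unfolding a_def using yx t10 by simp
      finally have c1: "(t1 - b) / a = y" by simp
      have "(t2 - b) / a = ((t2 - t0) + a * x) / a" unfolding b_def by (simp add: algebra_simps)
      also have "\<dots> = (t2 - t0) / a + x" using a0 by (simp add: add_divide_distrib)
      also have "(t2 - t0) / a = ?r * (y - x)" unfolding a_def by simp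
      finally have c2: "(t2 - b) / a = x + ?r * (y - x)" by simp
      show "z \<in> {p. fst p \<noteq> 0 \<and> {t0, t1, t2} \<subseteq> img p B}"
        unfolding za using memc[OF a0] c0 c1 c2 xy a0 by simp
    qed
  qed
  then show ?thesis by (rule bij_betw_same_card)
qed

lemma card_pairs:
  assumes "finite B"
  shows "int (card {(x, y). x \<in> B \<and> y \<in> B \<and> Q x y}) = (\<Sum>x\<in>B. \<Sum>y\<in>B. if Q x y then 1 else 0)"
proof -
  have "{(x, y). x \<in> B \<and> y \<in> B \<and> Q x y} = {p \<in> B \<times> B. Q (fst p) (snd p)}" by auto
  then have "int (card {(x, y). x \<in> B \<and> y \<in> B \<and> Q x y}) = (\<Sum>p\<in>B \<times> B. if Q (fst p) (snd p) then 1 else 0)"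
    using assms by (simp add: int_card_filter2)
  also have "\<dots> = (\<Sum>(x, y)\<in>B \<times> B. if Q x y then 1 else 0)" by (intro sum.cong) auto
  also have "\<dots> = (\<Sum>x\<in>B. \<Sum>y\<in>B. if Q x y then 1 else 0)" by (simp add: sum.cartesian_product)
  finally show ?thesis .
qed

lemma inj_const:
  assumes eq: "\<forall>u. P u \<longrightarrow> f u = g (h u)" and inj: "inj g"
  shows "(\<exists>c. \<forall>u. P u \<longrightarrow> f u = c) \<longleftrightarrow> (\<exists>c. \<forall>u. P u \<longrightarrow> h u = c)"
proof
  assume "\<exists>c. \<forall>u. P u \<longrightarrow> f u = c"
  then obtain c where c: "\<forall>u. P u \<longrightarrow> f u = c" by blast
  show "\<exists>c. \<forall>u. P u \<longrightarrow> h u = c"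
  proof (cases "\<exists>u0. P u0")
    case True
    then obtain u0 where "P u0" by blast
    then have "\<forall>u. P u \<longrightarrow> h u = h u0" using c eq inj by (metis injD)
    then show ?thesis by blast
  qed auto
next
  assume "\<exists>c. \<forall>u. P u \<longrightarrow> h u = c"
  then obtain c where "\<forall>u. P u \<longrightarrow> h u = c" by blast
  then have "\<forall>u. P u \<longrightarrow> f u = g c" using eq by simp
  then show "\<exists>c. \<forall>u. P u \<longrightarrow> f u = c" by blast
qed

lemma design_gen:
  fixes B :: "'a::{field,finite} set"
  assumes NC: "\<And>r. N_count B (1 + r) r 1 = card {(x, y). x \<in> B \<and> y \<in> B \<and> x \<noteq> y \<and> x + r * (y - x) \<in> B} + card B"
  shows "is_3_design (UNIV :: 'a set) (GA1_orbit B) \<longleftrightarrow> (\<exists>c. \<forall>r::'a. r \<notin> {0, 1} \<longrightarrow> N_count B (1 + r) r 1 = c)"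
proof -
  define s where "s = card {p::'a \<times> 'a. fst p \<noteq> 0 \<and> img p B = B}"
  define C where "C = (\<lambda>r::'a. card {(x, y). x \<in> B \<and> y \<in> B \<and> x \<noteq> y \<and> x + r * (y - x) \<in> B})"
  define lamT where "lamT = (\<lambda>T. card {Bl \<in> GA1_orbit B. T \<subseteq> Bl})"
  have "(1, 0) \<in> {p::'a \<times> 'a. fst p \<noteq> 0 \<and> img p B = B}" by (simp add: img_def)
  then have "{p::'a \<times> 'a. fst p \<noteq> 0 \<and> img p B = B} \<noteq> {}" by blast
  then have s0: "s > 0" unfolding s_def by (simp add: card_gt_0_iff)
  have NCr: "N_count B (1 + r) r 1 = C r + card B" for r
    using NC[of r] unfolding C_def by simp
  have key: "lamT {t0, t1, t2} * s = C ((t2 - t0) / (t1 - t0))"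
    if "t0 \<noteq> t1" "t0 \<noteq> t2" "t1 \<noteq> t2" for t0 t1 t2
    unfolding lamT_def s_def C_def using M_eq[of "{t0, t1, t2}" B] M_count[OF that, of B] by simp
  show ?thesis
  proof
    assume "is_3_design (UNIV :: 'a set) (GA1_orbit B)"
    then obtain lam where lam: "\<forall>T. T \<subseteq> (UNIV :: 'a set) \<and> card T = 3 \<longrightarrow> lamT T = lam"
      unfolding is_3_design_def lamT_def by blast
    have "\<forall>r::'a. r \<notin> {0, 1} \<longrightarrow> N_count B (1 + r) r 1 = lam * s + card B"
    proof (intro allI impI)
      fix r :: 'a assume r: "r \<notin> {0, 1}"
      have "card {0, 1, r} = 3" using r by simp
      then have "lamT {0, 1, r} = lam" using lam by blast
      moreover have "lamT {0, 1, r} * s = C ((r - 0) / (1 - 0))" using r by (intro key) auto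
      ultimately show "N_count B (1 + r) r 1 = lam * s + card B" using NCr by simp
    qed
    then show "\<exists>c. \<forall>r::'a. r \<notin> {0, 1} \<longrightarrow> N_count B (1 + r) r 1 = c" by blast
  next
    assume "\<exists>c. \<forall>r::'a. r \<notin> {0, 1} \<longrightarrow> N_count B (1 + r) r 1 = c"
    then obtain c where c: "\<forall>r::'a. r \<notin> {0, 1} \<longrightarrow> N_count B (1 + r) r 1 = c" by blast
    have "\<forall>T. T \<subseteq> (UNIV :: 'a set) \<and> card T = 3 \<longrightarrow> lamT T = (c - card B) div s"
    proof (intro allI impI)
      fix T :: "'a set" assume "T \<subseteq> UNIV \<and> card T = 3"
      then obtain t0 t1 t2 where T: "T = {t0, t1, t2}" and d: "t0 \<noteq> t1" "t1 \<noteq> t2" "t0 \<noteq> t2"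
        unfolding card_3_iff by blast
      define r where "r = (t2 - t0) / (t1 - t0)"
      have r0: "r \<noteq> 0" unfolding r_def using d by simp
      have r1: "r \<noteq> 1" unfolding r_def using d by (simp add: divide_eq_1_iff)
      have "lamT T * s = C r" unfolding T r_def using d by (intro key) auto
      moreover have "C r + card B = c" using c r0 r1 NCr by simp
      ultimately have "lamT T * s = c - card B" by simp
      then have "(c - card B) div s = lamT T * s div s" by simp
      also have "\<dots> = lamT T" using s0 by simp
      finally show "lamT T = (c - card B) div s" by simp
    qed
    then show "is_3_design (UNIV :: 'a set) (GA1_orbit B)"
      unfolding is_3_design_def lamT_def by blast
  qed
qed

lemma sum_lin:
  assumes "b \<noteq> 0"
  shows "(\<Sum>y\<in>UNIV. (if w + b * y \<in> E then 1 else 0 :: int)) = int (card (E::'a::{field,finite} set))"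
proof -
  have "(\<Sum>y\<in>UNIV. (if w + b * y \<in> E then 1 else 0 :: int)) = (\<Sum>v\<in>UNIV. (if v \<in> E then 1 else 0 :: int))"
    by (rule sum.reindex_bij_witness[of _ "\<lambda>v. (v - w) / b" "\<lambda>y. w + b * y"]) (use assms in auto)
  also have "\<dots> = int (card E)" by (simp add: sum.If_cases)
  finally show ?thesis .
qed

lemma sum_chi: "(\<Sum>x\<in>E. F x) = (\<Sum>x\<in>UNIV. (if x \<in> (E::'a::{field,finite} set) then 1 else 0) * (F x :: int))"
proof -
  have "(\<Sum>x\<in>UNIV. (if x \<in> E then 1 else 0) * F x) = (\<Sum>x\<in>UNIV. if x \<in> E then F x else 0)"
    by (intro sum.cong) auto
  also have "\<dots> = sum F (UNIV \<inter> E)" by (rule sum.inter_restrict[symmetric]) simp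
  finally show ?thesis by simp
qed

lemma sum2_gen:
  fixes E :: "'a::{field,finite} set"
  assumes a0: "a \<noteq> 0" and b0: "b \<noteq> 0"
    and N_sum1: "int (N_count E a b 1) = (\<Sum>x\<in>E. \<Sum>y\<in>E. if a * x + b * y \<in> E then 1 else 0)"
  shows "(\<Sum>x\<in>UNIV. \<Sum>y\<in>UNIV. (-1::int) ^ (charf E x + charf E y + charf E (a * x + b * (y::'a))))
     = int (card (UNIV::'a set)) ^ 2 - 6 * int (card (UNIV::'a set)) * int (card E) + 12 * int (card E) ^ 2
       - 8 * int (N_count E a b 1)"
proof -
  let ?q = "int (card (UNIV::'a set))"
  let ?k = "int (card E)"
  define X where "X = (\<lambda>x::'a. if x \<in> E then 1 else 0 :: int)"
  define T where "T = (\<lambda>x. \<Sum>y\<in>UNIV. X y * X (a * x + b * y))"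
  have sX: "(\<Sum>x\<in>UNIV. X x) = ?k" unfolding X_def by (simp add: sum.If_cases)
  have sY: "(\<Sum>y\<in>UNIV. X (a * x + b * y)) = ?k" for x
    unfolding X_def using sum_lin[OF b0] by simp
  have sXa: "(\<Sum>x\<in>UNIV. X (a * x + b * y)) = ?k" for y
    unfolding X_def using sum_lin[OF a0, of "b * y" E] by (simp add: add.commute)
  have sT: "(\<Sum>x\<in>UNIV. T x) = ?k ^ 2"
  proof -
    have "(\<Sum>x\<in>UNIV. T x) = (\<Sum>y\<in>UNIV. X y * (\<Sum>x\<in>UNIV. X (a * x + b * y)))"
      unfolding T_def by (subst sum.swap) (simp add: sum_distrib_left)
    also have "\<dots> = ?k ^ 2" by (simp add: sXa sX sum_distrib_right[symmetric] power2_eq_square)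
    finally show ?thesis .
  qed
  have sXT: "(\<Sum>x\<in>UNIV. X x * T x) = int (N_count E a b 1)"
    unfolding N_sum1 T_def X_def
    by (simp add: sum_chi[where E=E] sum_distrib_left mult.assoc)
  have pt: "(-1::int) ^ (charf E x + charf E y + charf E (a * x + b * y))
      = 1 - 2 * X x - 2 * X y - 2 * X (a * x + b * y) + 4 * X x * X y + 4 * X x * X (a * x + b * y)
        + 4 * (X y * X (a * x + b * y)) - 8 * X x * (X y * X (a * x + b * y))" for x y
    unfolding X_def charf_def by (simp add: power_add)
  have inner: "(\<Sum>y\<in>UNIV. (-1::int) ^ (charf E x + charf E y + charf E (a * x + b * y)))
     = ?q - 4 * ?k + (8 * ?k - 2 * ?q) * X x + 4 * T x - 8 * (X x * T x)" for x
  proof -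
    have "(\<Sum>y\<in>UNIV. (-1::int) ^ (charf E x + charf E y + charf E (a * x + b * y)))
      = (\<Sum>y::'a\<in>UNIV. 1 - 2 * X x) - 2 * (\<Sum>y\<in>UNIV. X y)
        - 2 * (\<Sum>y\<in>UNIV. X (a * x + b * y)) + 4 * X x * (\<Sum>y\<in>UNIV. X y)
        + 4 * X x * (\<Sum>y\<in>UNIV. X (a * x + b * y))
        + 4 * (\<Sum>y\<in>UNIV. X y * X (a * x + b * y))
        - 8 * X x * (\<Sum>y\<in>UNIV. X y * X (a * x + b * y))"
      unfolding pt by (simp add: sum.distrib sum_subtractf sum_distrib_left)
    also have "\<dots> = ?q * (1 - 2 * X x) - 2 * ?k - 2 * ?k + 4 * X x * ?k + 4 * X x * ?k + 4 * T x - 8 * X x * T x"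
      unfolding sX sY T_def by simp
    also have "\<dots> = ?q - 4 * ?k + (8 * ?k - 2 * ?q) * X x + 4 * T x - 8 * (X x * T x)"
      by (simp add: algebra_simps)
    finally show ?thesis .
  qed
  have "(\<Sum>x\<in>UNIV. \<Sum>y\<in>UNIV. (-1::int) ^ (charf E x + charf E y + charf E (a * x + b * (y::'a))))
     = (\<Sum>x\<in>UNIV. ?q - 4 * ?k + (8 * ?k - 2 * ?q) * X x + 4 * T x - 8 * (X x * T x))"
    by (simp only: inner)
  also have "\<dots> = (\<Sum>x::'a\<in>UNIV. ?q - 4 * ?k) + (8 * ?k - 2 * ?q) * (\<Sum>x\<in>UNIV. X x)
        + 4 * (\<Sum>x\<in>UNIV. T x) - 8 * (\<Sum>x\<in>UNIV. X x * T x)"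
    by (simp add: sum.distrib sum_subtractf sum_distrib_left)
  also have "\<dots> = ?q * (?q - 4 * ?k) + (8 * ?k - 2 * ?q) * ?k + 4 * ?k ^ 2 - 8 * int (N_count E a b 1)"
    unfolding sX sT sXT by simp
  finally show ?thesis by (simp add: algebra_simps power2_eq_square)
qed

definition ss :: "nat \<Rightarrow> ('a::{field,finite}) set \<Rightarrow> 'a \<Rightarrow> int" where
  "ss n S \<mu> = (\<Sum>x\<in>S. sgn_gf2 (abs_trace n (\<mu> * x)))"

lemma int_card_filter:
  assumes "finite A"
  shows "int (card {p\<in>A. Q p}) = (\<Sum>p\<in>A. if Q p then 1 else 0)"
  using assms by (simp add: sum.If_cases Int_def)

lemma N_sum: "int (N_count S a b c) =
  (\<Sum>x\<in>S. \<Sum>y\<in>S. \<Sum>z\<in>S. if a * x + b * y + c * z = (0::'a::{field,finite}) then 1 else 0)"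
proof -
  have "{(x, y, z). x \<in> S \<and> y \<in> S \<and> z \<in> S \<and> a * x + b * y + c * z = 0}
     = {p \<in> S \<times> S \<times> S. a * fst p + b * fst (snd p) + c * snd (snd p) = 0}" by auto
  then have "int (N_count S a b c) = (\<Sum>p\<in>S \<times> S \<times> S. if a * fst p + b * fst (snd p) + c * snd (snd p) = 0 then 1 else 0)"
    unfolding N_count_def by (simp add: int_card_filter)
  also have "\<dots> = (\<Sum>(x,yz)\<in>S \<times> (S \<times> S). if a * x + b * fst yz + c * snd yz = 0 then 1 else 0)"
    by (intro sum.cong) auto
  also have "\<dots> = (\<Sum>x\<in>S. \<Sum>yz\<in>S \<times> S. if a * x + b * fst yz + c * snd yz = 0 then 1 else 0)"
    by (simp add: sum.cartesian_product)
  also have "\<dots> = (\<Sum>x\<in>S. \<Sum>(y,z)\<in>S \<times> S. if a * x + b * y + c * z = 0 then 1 else 0)"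
    by (intro sum.cong) auto
  also have "\<dots> = (\<Sum>x\<in>S. \<Sum>y\<in>S. \<Sum>z\<in>S. if a * x + b * y + c * z = 0 then 1 else 0)"
    by (simp add: sum.cartesian_product)
  finally show ?thesis .
qed

lemma triple_prod: "(\<Sum>x\<in>A. f x) * (\<Sum>y\<in>B. g y) * (\<Sum>z\<in>C. h z) =
   (\<Sum>x\<in>A. \<Sum>y\<in>B. \<Sum>z\<in>C. f x * g y * (h z :: int))"
proof -
  have "(\<Sum>x\<in>A. f x) * (\<Sum>y\<in>B. g y) * (\<Sum>z\<in>C. h z) = (\<Sum>x\<in>A. \<Sum>y\<in>B. f x * g y) * (\<Sum>z\<in>C. h z)"
    by (subst sum_product) (rule refl)
  also have "\<dots> = (\<Sum>x\<in>A. (\<Sum>y\<in>B. f x * g y) * (\<Sum>z\<in>C. h z))"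
    by (rule sum_distrib_right)
  also have "\<dots> = (\<Sum>x\<in>A. \<Sum>y\<in>B. (f x * g y) * (\<Sum>z\<in>C. h z))"
    by (simp only: sum_distrib_right)
  also have "\<dots> = (\<Sum>x\<in>A. \<Sum>y\<in>B. \<Sum>z\<in>C. f x * g y * h z)"
    by (simp only: sum_distrib_left)
  finally show ?thesis .
qed

lemma N_swap: "N_count S a b c = N_count S b a (c::'a::{field,finite})"
proof -
  have "int (N_count S a b c) = int (N_count S b a c)"
    unfolding N_sum
    by (rule trans[OF sum.swap], intro sum.cong refl) (simp add: add.commute)
  then show ?thesis by simp
qed

context
  fixes n :: nat
  assumes qcard: "card (UNIV :: 'a::{field,finite} set) = 2^n"
begin

lemma char2: "(1::'a) + 1 = 0"
proof -
  have d: "CHAR('a) dvd 2^n" using CHAR_dvd_CARD[where 'a='a] qcard by simp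
  have "CHAR('a) > 0" by (rule finite_imp_CHAR_pos) simp
  then have p: "prime CHAR('a)" by (rule prime_CHAR_semidom)
  then have "CHAR('a) dvd 2" using d prime_dvd_power by blast
  then have "CHAR('a) = 2" using p primes_dvd_imp_eq two_is_prime_nat by blast
  then have "(of_nat 2 :: 'a) = 0" by (metis of_nat_CHAR)
  then show ?thesis by simp
qed


lemma two0[simp]: "(2::'a) = 0"
  using char2 by simp

lemma add_self[simp]: "(x::'a) + x = 0"
proof -
  have "x + x = 2 * x" by (simp add: mult_2)
  then show ?thesis by simp
qed

lemma neg_self[simp]: "- (x::'a) = x"
  by (rule add.inverse_unique) simp

lemma diff_eq_add: "(x::'a) - y = x + y"
  by (metis diff_conv_add_uminus neg_self)

lemma card_ge2: "card (UNIV :: 'a set) \<ge> 2"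
proof -
  have "{0::'a, 1} \<subseteq> UNIV" by simp
  then have "card {0::'a, 1} \<le> card (UNIV :: 'a set)" by (intro card_mono) auto
  then show ?thesis by simp
qed

lemma n_pos: "n > 0"
  using card_ge2 qcard by (cases n) auto

lemma fermat: "(x::'a) ^ card (UNIV :: 'a set) = x"
proof (cases "x = 0")
  case False
  have "x * (\<Prod>y\<in>UNIV-{0}. x * y) = x * x ^ (card (UNIV :: 'a set) - 1) * \<Prod>(UNIV-{0})"
    by (simp add: prod.distrib mult_ac)
  also have "x * x ^ (card (UNIV :: 'a set) - 1) = x ^ Suc (card (UNIV :: 'a set) - 1)"
    by (subst power_Suc) auto
  also have "Suc (card (UNIV :: 'a set) - 1) = card (UNIV :: 'a set)"
    using finite_UNIV_card_ge_0[where ?'a = 'a] by simp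
  also have "(\<Prod>y\<in>UNIV-{0}. x * y) = (\<Prod>y\<in>UNIV-{0}. y)"
    by (rule prod.reindex_bij_witness[of _ "\<lambda>y. y / x" "\<lambda>y. x * y"]) (use False in auto)
  finally show ?thesis
    by simp
qed (use finite_UNIV_card_ge_0[where ?'a = 'a] in auto)

lemma sq_add: "((x::'a) + y) ^ 2 = x ^ 2 + y ^ 2"
proof -
  have "(x + y) ^ 2 = x ^ 2 + y ^ 2 + (1 + 1) * (x * y)"
    by (simp add: power2_eq_square algebra_simps)
  then show ?thesis by (simp add: char2)
qed

lemma pow2_add: "((x::'a) + y) ^ (2 ^ i) = x ^ (2 ^ i) + y ^ (2 ^ i)"
proof (induction i)
  case 0 then show ?case by simp
next
  case (Suc i)
  have "(x + y) ^ (2 ^ Suc i) = ((x + y) ^ (2 ^ i)) ^ 2"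
    by (simp add: power_mult[symmetric] mult.commute)
  also have "\<dots> = (x ^ (2 ^ i)) ^ 2 + (y ^ (2 ^ i)) ^ 2" by (simp add: Suc sq_add)
  also have "\<dots> = x ^ (2 ^ Suc i) + y ^ (2 ^ Suc i)"
    by (simp add: power_mult[symmetric] mult.commute)
  finally show ?case .
qed

lemma tr_add: "abs_trace n ((x::'a) + y) = abs_trace n x + abs_trace n y"
  unfolding abs_trace_def by (simp add: pow2_add sum.distrib)

lemma tr_zero: "abs_trace n (0::'a) = 0"
  unfolding abs_trace_def by (simp add: power_0_left)

lemma sgn1: "sgn_gf2 (1::'a) = -1" by (simp add: sgn_gf2_def)
lemma sgn0: "sgn_gf2 (0::'a) = 1" by (simp add: sgn_gf2_def)

lemma sum_sq: "finite I \<Longrightarrow> (\<Sum>i\<in>I. (f i :: 'a)) ^ 2 = (\<Sum>i\<in>I. f i ^ 2)"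
  by (induction I rule: finite_induct) (simp_all add: sq_add)

lemma tr_sq: "abs_trace n (x::'a) ^ 2 = abs_trace n x"
proof -
  have "abs_trace n x ^ 2 = (\<Sum>i<n. x ^ (2 ^ Suc i))"
    unfolding abs_trace_def by (simp add: sum_sq power_mult[symmetric] mult.commute)
  also have "\<dots> = (\<Sum>i<Suc n. x ^ (2 ^ i)) - x ^ (2 ^ 0)"
    by (subst sum.lessThan_Suc_shift) simp
  also have "\<dots> = abs_trace n x + x ^ (2 ^ n) - x"
    unfolding abs_trace_def by simp
  also have "x ^ (2 ^ n) = x" using fermat qcard by metis
  finally show ?thesis by simp
qed

lemma tr01: "abs_trace n (x::'a) = 0 \<or> abs_trace n x = 1"
proof -
  have "abs_trace n x * (abs_trace n x - 1) = 0"
    using tr_sq[of x] by (simp add: power2_eq_square algebra_simps)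
  then show ?thesis by simp
qed

lemma sgn_tr_add: "sgn_gf2 (abs_trace n ((x::'a) + y)) = sgn_gf2 (abs_trace n x) * sgn_gf2 (abs_trace n y)"
  using tr01[of x] tr01[of y] unfolding tr_add sgn_gf2_def by (auto simp: char2)

lemma tr_nonzero: "\<exists>x::'a. abs_trace n x \<noteq> 0"
proof (rule ccontr)
  assume "\<not> ?thesis"
  then have all: "\<And>x::'a. abs_trace n x = 0" by blast
  define p :: "'a poly" where "p = (\<Sum>i<n. monom 1 (2 ^ i))"
  have ev: "poly p x = abs_trace n x" for x
    unfolding p_def abs_trace_def by (simp add: poly_sum poly_monom)
  have "coeff p 1 = (\<Sum>i<n. if 2 ^ i = (1::nat) then 1 else 0)"
    unfolding p_def by (simp add: coeff_sum coeff_monom)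
  also have "\<dots> = (\<Sum>i<n. if i = 0 then 1 else 0)"
    by (intro sum.cong) auto
  also have "\<dots> = 1" using n_pos by simp
  finally have "p \<noteq> 0" by auto
  then have "card {x. poly p x = 0} \<le> degree p" by (rule card_poly_roots_bound)
  moreover have "{x. poly p x = 0} = UNIV" using ev all by auto
  moreover have "degree p \<le> 2 ^ (n - 1)"
    unfolding p_def
  proof (intro degree_sum_le)
    fix i assume "i \<in> {..<n}"
    then have "(2::nat) ^ i \<le> 2 ^ (n - 1)" by (intro power_increasing) auto
    then show "degree (monom (1::'a) (2 ^ i)) \<le> 2 ^ (n - 1)"
      by (meson degree_monom_le le_trans)
  qed simp
  ultimately have "(2::nat) ^ n \<le> 2 ^ (n - 1)" using qcard by (metis le_trans)
  moreover have "(2::nat) ^ (n - 1) < 2 ^ n" using n_pos by (intro power_strict_increasing) auto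
  ultimately show False by linarith
qed

lemma char_sum: "(\<Sum>x\<in>UNIV. sgn_gf2 (abs_trace n (\<mu> * (x::'a)))) = (if \<mu> = 0 then int (card (UNIV::'a set)) else 0)"
proof (cases "\<mu> = 0")
  case True then show ?thesis by (simp add: tr_zero sgn0)
next
  case False
  obtain x0 :: 'a where x0: "abs_trace n x0 \<noteq> 0" using tr_nonzero by blast
  then have x01: "abs_trace n x0 = 1" using tr01 by blast
  let ?s = "(\<Sum>x\<in>UNIV. sgn_gf2 (abs_trace n (\<mu> * (x::'a))))"
  have "?s = (\<Sum>x\<in>UNIV. sgn_gf2 (abs_trace n (\<mu> * (x + x0 / \<mu>))))"
    by (rule sum.reindex_bij_witness[of _ "\<lambda>x. x - x0 / \<mu>" "\<lambda>x. x + x0 / \<mu>"]) auto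
  also have "\<dots> = (\<Sum>x\<in>UNIV. - sgn_gf2 (abs_trace n (\<mu> * x)))"
  proof (intro sum.cong refl)
    fix x
    have "\<mu> * (x + x0 / \<mu>) = \<mu> * x + x0" using False by (simp add: distrib_left)
    then show "sgn_gf2 (abs_trace n (\<mu> * (x + x0 / \<mu>))) = - sgn_gf2 (abs_trace n (\<mu> * x))"
      by (simp add: sgn_tr_add x01 sgn1)
  qed
  also have "\<dots> = - ?s" by (simp add: sum_negf)
  finally show ?thesis using False by simp
qed

lemma char_sum': "(\<Sum>\<mu>\<in>UNIV. sgn_gf2 (abs_trace n (\<mu> * (w::'a)))) = (if w = 0 then int (card (UNIV::'a set)) else 0)"
  by (subst char_sum[symmetric]) (simp add: mult.commute)

lemma walsh_eq: "walsh n S \<mu> = (if \<mu> = (0::'a) then int (card (UNIV::'a set)) else 0) - 2 * ss n S \<mu>"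
proof -
  have "walsh n S \<mu> = (\<Sum>x\<in>UNIV. sgn_gf2 (abs_trace n (\<mu> * x)) - 2 * (if x \<in> S then sgn_gf2 (abs_trace n (\<mu> * x)) else 0))"
    unfolding walsh_def by (intro sum.cong refl) (simp add: charf_def)
  also have "\<dots> = (\<Sum>x\<in>UNIV. sgn_gf2 (abs_trace n (\<mu> * x))) - 2 * (\<Sum>x\<in>UNIV. if x \<in> S then sgn_gf2 (abs_trace n (\<mu> * x)) else 0)"
    by (simp add: sum_subtractf sum_distrib_left)
  also have "(\<Sum>x\<in>UNIV. if x \<in> S then sgn_gf2 (abs_trace n (\<mu> * x)) else 0) = ss n S \<mu>"
    unfolding ss_def by (subst sum.inter_restrict[symmetric]) auto
  finally show ?thesis by (simp add: char_sum)
qed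

lemma ss0: "ss n S (0::'a) = int (card S)"
  unfolding ss_def by (simp add: tr_zero sgn0)

lemma sgn_split: "sgn_gf2 (abs_trace n (\<mu> * (a * x + b * y + c * z))) =
   sgn_gf2 (abs_trace n (a * \<mu> * x)) * sgn_gf2 (abs_trace n (b * \<mu> * y)) * sgn_gf2 (abs_trace n (c * \<mu> * (z::'a)))"
proof -
  have "\<mu> * (a * x + b * y + c * z) = a * \<mu> * x + b * \<mu> * y + c * \<mu> * z" by (simp add: algebra_simps)
  then show ?thesis by (simp add: sgn_tr_add)
qed

lemma N_fourier: "int (card (UNIV::'a set)) * int (N_count S a b c) =
   (\<Sum>\<mu>\<in>UNIV. ss n S (a * \<mu>) * ss n S (b * \<mu>) * ss n S (c * (\<mu>::'a)))"
proof -
  have "(\<Sum>\<mu>\<in>UNIV. ss n S (a * \<mu>) * ss n S (b * \<mu>) * ss n S (c * (\<mu>::'a)))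
      = (\<Sum>\<mu>\<in>UNIV. \<Sum>x\<in>S. \<Sum>y\<in>S. \<Sum>z\<in>S. sgn_gf2 (abs_trace n (\<mu> * (a * x + b * y + c * z))))"
    unfolding ss_def sgn_split triple_prod by (simp add: mult.assoc)
  also have "\<dots> = (\<Sum>x\<in>S. \<Sum>y\<in>S. \<Sum>z\<in>S. \<Sum>\<mu>\<in>UNIV. sgn_gf2 (abs_trace n (\<mu> * (a * x + b * y + c * z))))"
    by (simp only: sum.swap[of _ UNIV])
  also have "\<dots> = (\<Sum>x\<in>S. \<Sum>y\<in>S. \<Sum>z\<in>S. (if a * x + b * y + c * z = 0 then int (card (UNIV::'a set)) else 0))"
    by (simp only: char_sum')
  also have "\<dots> = int (card (UNIV::'a set)) * int (N_count S a b c)"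
    unfolding N_sum sum_distrib_left by (intro sum.cong refl) simp
  finally show ?thesis by simp
qed

lemma add_eq0_iff: "(w + z = (0::'a)) = (z = w)"
  by (metis add_self add_left_cancel)

lemma N_sum1: "int (N_count S a b 1) = (\<Sum>x\<in>S. \<Sum>y\<in>S. if a * x + b * y \<in> (S::'a set) then 1 else 0)"
  unfolding N_sum by (simp add: add_eq0_iff)

lemma pow_inj:
  assumes d0: "d > 0" and hd: "gcd d (2 ^ n - 1) = 1"
  shows "inj (\<lambda>x::'a. x ^ d)"
proof (rule injI)
  fix x y :: 'a assume xy: "x ^ d = y ^ d"
  show "x = y"
  proof (cases "x = 0")
    case True then show ?thesis using xy d0 by (metis power_eq_0_iff zero_power)
  next
    case False
    then have y0: "y \<noteq> 0" using xy d0 by (metis power_eq_0_iff zero_power)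
    define z where "z = x / y"
    have z0: "z \<noteq> 0" using False y0 by (simp add: z_def)
    have zd: "z ^ d = 1" using xy y0 by (simp add: z_def power_divide)
    define m where "m = 2 ^ n - (1::nat)"
    have "(2::nat) ^ n > 0" by simp
    then have e: "2 ^ n = Suc m" unfolding m_def by simp
    have "z * z ^ m = z ^ (2 ^ n)" by (simp add: e)
    also have "\<dots> = z" using fermat qcard by metis
    finally have zq: "z ^ m = 1" using z0 by simp
    obtain a b where ab: "d * a = m * b + gcd d m"
      using bezout_nat[of d m] d0 by auto
    have hd': "gcd d m = 1" using hd m_def by simp
    have "z = (z ^ m) ^ b * z" by (simp add: zq)
    also have "\<dots> = z ^ (m * b + 1)" by (simp add: power_add power_mult)
    also have "\<dots> = z ^ (d * a)" using ab hd' by simp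
    also have "\<dots> = 1" by (simp add: power_mult zd)
    finally have z1: "z = 1" .
    then have "x / y = 1" unfolding z_def .
    then show ?thesis using y0 by (metis divide_eq_1_iff)
  qed
qed

lemma pow_reindex:
  assumes "d > 0" "gcd d (2 ^ n - 1) = 1"
  shows "(\<Sum>\<mu>\<in>UNIV. F (\<mu> ^ d)) = (\<Sum>\<nu>\<in>UNIV. (F (\<nu>::'a) :: int))"
proof -
  have inj: "inj (\<lambda>x::'a. x ^ d)" by (rule pow_inj[OF assms])
  have su: "range (\<lambda>x::'a. x ^ d) = UNIV" by (rule finite_UNIV_inj_surj[OF finite_UNIV inj])
  have "(\<Sum>\<nu>\<in>UNIV. F \<nu>) = (\<Sum>\<nu>\<in>range (\<lambda>x::'a. x ^ d). F \<nu>)" by (simp only: su)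
  also have "\<dots> = sum (F \<circ> (\<lambda>x::'a. x ^ d)) UNIV" by (rule sum.reindex[OF inj])
  finally show ?thesis unfolding comp_def by (rule sym)
qed

lemma N_transfer:
  fixes B E :: "'a set"
  assumes hE: "\<forall>\<mu>::'a. walsh n B \<mu> = walsh n E (\<mu> ^ d)"
    and d0: "d > 0" and hd: "gcd d (2 ^ n - 1) = 1"
  shows "N_count B a b c = N_count E (a ^ d) (b ^ d) (c ^ d)"
proof -
  have sse: "ss n B \<mu> = ss n E (\<mu> ^ d)" for \<mu>
    using hE[rule_format, of \<mu>] d0 by (simp add: walsh_eq)
  have "int (card (UNIV::'a set)) * int (N_count B a b c)
      = (\<Sum>\<mu>\<in>UNIV. ss n E (a ^ d * \<mu> ^ d) * ss n E (b ^ d * \<mu> ^ d) * ss n E (c ^ d * \<mu> ^ d))"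
    unfolding N_fourier sse by (simp add: power_mult_distrib)
  also have "\<dots> = (\<Sum>\<nu>\<in>UNIV. ss n E (a ^ d * \<nu>) * ss n E (b ^ d * \<nu>) * ss n E (c ^ d * \<nu>))"
    by (rule pow_reindex[OF d0 hd, where F = "\<lambda>\<nu>. ss n E (a ^ d * \<nu>) * ss n E (b ^ d * \<nu>) * ss n E (c ^ d * \<nu>)"])
  also have "\<dots> = int (card (UNIV::'a set)) * int (N_count E (a ^ d) (b ^ d) (c ^ d))"
    by (rule N_fourier[symmetric])
  finally show ?thesis using card_ge2 by simp
qed

lemma sum3_formula:
  assumes a0: "a \<noteq> 0" and b0: "b \<noteq> 0"
  shows "(\<Sum>\<alpha>\<in>UNIV. walsh n E \<alpha> * walsh n E (a * \<alpha>) * walsh n E (b * (\<alpha>::'a)))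
     = (int (card (UNIV::'a set)) - 2 * int (card E)) ^ 3
       - 8 * (int (card (UNIV::'a set)) * int (N_count E a b 1) - int (card E) ^ 3)"
proof -
  let ?q = "int (card (UNIV::'a set))"
  let ?f = "\<lambda>\<alpha>::'a. walsh n E \<alpha> * walsh n E (a * \<alpha>) * walsh n E (b * \<alpha>)"
  let ?g = "\<lambda>\<mu>::'a. ss n E (a * \<mu>) * ss n E (b * \<mu>) * ss n E (1 * \<mu>)"
  have r: "sum ?g UNIV = ?g 0 + sum ?g (UNIV - {0})" by (rule sum.remove) auto
  have "sum ?f UNIV = ?f 0 + sum ?f (UNIV - {0})" by (rule sum.remove) auto
  also have "?f 0 = (?q - 2 * int (card E)) ^ 3" by (simp add: walsh_eq ss0 power3_eq_cube)
  also have "sum ?f (UNIV - {0}) = sum (\<lambda>\<alpha>. - 8 * ?g \<alpha>) (UNIV - {0})"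
    by (intro sum.cong refl) (use a0 b0 in \<open>auto simp: walsh_eq\<close>)
  also have "\<dots> = - 8 * (sum ?g UNIV - ?g 0)"
    by (subst sum_distrib_left[symmetric]) (simp only: r, simp)
  also have "sum ?g UNIV = ?q * int (N_count E a b 1)" by (rule N_fourier[symmetric])
  also have "?g 0 = int (card E) ^ 3" by (simp add: ss0 power3_eq_cube)
  finally show ?thesis by simp
qed


end

context
  fixes n :: nat
  assumes qcard: "card (UNIV :: 'a::{field,finite} set) = 2^n"
begin

lemmas cs[simp] = add_self[OF qcard] neg_self[OF qcard] two0[OF qcard]

lemma NC:
  fixes B :: "'a set" and r :: 'a
  shows "int (N_count B (1 + r) r 1)
     = int (card {(x, y). x \<in> B \<and> y \<in> B \<and> x \<noteq> y \<and> x + r * (y - x) \<in> B}) + int (card B)"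
proof -
  have pt: "(if (1 + r) * x + r * y \<in> B then 1 else 0)
      = (if x \<noteq> y \<and> x + r * (y - x) \<in> B then 1 else 0) + (if x = y then 1 else (0::int))"
    if "x \<in> B" "y \<in> B" for x y
  proof (cases "x = y")
    case True
    have "(1 + r) * x + r * y = x + (r * x + r * x)" using True by (simp add: algebra_simps)
    then show ?thesis using True that by simp
  next
    case False
    have "x + r * (y - x) = x + r * y - r * x" by (simp add: algebra_simps)
    also have "\<dots> = x + r * y + r * x" by (rule diff_eq_add[OF qcard])
    also have "\<dots> = (1 + r) * x + r * y" by (simp add: algebra_simps)
    finally have "x + r * (y - x) = (1 + r) * x + r * y" .
    then show ?thesis using False by simp
  qed
  have "int (N_count B (1 + r) r 1) = (\<Sum>x\<in>B. \<Sum>y\<in>B. if (1 + r) * x + r * y \<in> B then 1 else 0)"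
    by (rule N_sum1[OF qcard])
  also have "\<dots> = (\<Sum>x\<in>B. \<Sum>y\<in>B. (if x \<noteq> y \<and> x + r * (y - x) \<in> B then 1 else 0) + (if x = y then 1 else (0::int)))"
    using pt by (intro sum.cong refl) auto
  also have "\<dots> = (\<Sum>x\<in>B. \<Sum>y\<in>B. if x \<noteq> y \<and> x + r * (y - x) \<in> B then 1 else 0) + int (card B)"
    by (simp add: sum.distrib)
  also have "(\<Sum>x\<in>B. \<Sum>y\<in>B. if x \<noteq> y \<and> x + r * (y - x) \<in> B then 1 else (0::int))
      = int (card {(x, y). x \<in> B \<and> y \<in> B \<and> x \<noteq> y \<and> x + r * (y - x) \<in> B})"
    by (rule card_pairs[symmetric]) simp
  finally show ?thesis .
qed

lemma sum2_formula:
  assumes a0: "a \<noteq> 0" and b0: "b \<noteq> 0"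
  shows "(\<Sum>x\<in>UNIV. \<Sum>y\<in>UNIV. (-1::int) ^ (charf E x + charf E y + charf E (a * x + b * (y::'a))))
     = int (card (UNIV::'a set)) ^ 2 - 6 * int (card (UNIV::'a set)) * int (card E) + 12 * int (card E) ^ 2
       - 8 * int (N_count E a b 1)"
  by (rule sum2_gen[OF a0 b0 N_sum1[OF qcard]])

lemma design_iff:
  fixes B :: "'a set"
  shows "is_3_design (UNIV :: 'a set) (GA1_orbit B) \<longleftrightarrow> (\<exists>c. \<forall>r::'a. r \<notin> {0, 1} \<longrightarrow> N_count B (1 + r) r 1 = c)"
proof (rule design_gen)
  fix r :: 'a
  show "N_count B (1 + r) r 1 = card {(x, y). x \<in> B \<and> y \<in> B \<and> x \<noteq> y \<and> x + r * (y - x) \<in> B} + card B"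
    using NC[of B r] by linarith
qed

end

theorem theorem8:
  fixes B E :: "('a::{field,finite}) set" and n k d :: nat
  assumes q: "card (UNIV :: 'a set) = 2 ^ n"
    and Bk: "card B = k" and k3: "k \<ge> 3"
    and hE: "\<forall>\<mu>::'a. walsh n B \<mu> = walsh n E (\<mu> ^ d)"
    and hd: "gcd d (2 ^ n - 1) = 1"
  shows "(is_3_design (UNIV :: 'a set) (GA1_orbit B) \<longleftrightarrow>
           (\<exists>c. \<forall>u::'a. u \<notin> {0, 1} \<longrightarrow>
              (\<Sum>x\<in>UNIV. \<Sum>y\<in>UNIV. (-1::int) ^ (charf E x + charf E y
                   + charf E (u ^ d * x + (1 + u) ^ d * y))) = c))
       \<and> ((\<exists>c. \<forall>u::'a. u \<notin> {0, 1} \<longrightarrow>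
              (\<Sum>x\<in>UNIV. \<Sum>y\<in>UNIV. (-1::int) ^ (charf E x + charf E y
                   + charf E (u ^ d * x + (1 + u) ^ d * y))) = c) \<longleftrightarrow>
           (\<exists>c. \<forall>u::'a. u \<notin> {0, 1} \<longrightarrow>
              (\<Sum>\<alpha>\<in>UNIV. walsh n E \<alpha> * walsh n E (u ^ d * \<alpha>)
                   * walsh n E ((1 + u) ^ d * \<alpha>)) = c))
       \<and> ((\<exists>c. \<forall>u::'a. u \<notin> {0, 1} \<longrightarrow>
              (\<Sum>\<alpha>\<in>UNIV. walsh n E \<alpha> * walsh n E (u ^ d * \<alpha>)
                   * walsh n E ((1 + u) ^ d * \<alpha>)) = c) \<longleftrightarrow>
           (\<exists>c. \<forall>u::'a. u \<notin> {0, 1} \<longrightarrow> N_count E (u ^ d) ((1 + u) ^ d) 1 = c))"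
proof -
  have d0: "d > 0"
  proof (rule ccontr)
    assume "\<not> d > 0"
    then have "d = 0" by simp
    then have "2 ^ n - 1 = (1::nat)" using hd by simp
    then have "(2::nat) ^ n = 2" by simp
    then have "card (UNIV :: 'a set) = 2" using q by simp
    moreover have "card B \<le> card (UNIV :: 'a set)" by (rule card_mono) auto
    ultimately show False using Bk k3 by simp
  qed
  have nz: "u ^ d \<noteq> 0 \<and> (1 + u) ^ d \<noteq> 0" if "u \<notin> {0, 1}" for u :: 'a
  proof -
    have "1 + u \<noteq> 0" using that add_eq0_iff[OF q, of 1 u] by auto
    then show ?thesis using that by simp
  qed
  let ?P = "\<lambda>u::'a. u \<notin> {0, 1}"
  let ?N = "\<lambda>u::'a. N_count E (u ^ d) ((1 + u) ^ d) 1"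
  let ?S2 = "\<lambda>u::'a. (\<Sum>x\<in>UNIV. \<Sum>y\<in>UNIV. (-1::int) ^ (charf E x + charf E y
                   + charf E (u ^ d * x + (1 + u) ^ d * y)))"
  let ?S3 = "\<lambda>u::'a. (\<Sum>\<alpha>\<in>UNIV. walsh n E \<alpha> * walsh n E (u ^ d * \<alpha>)
                   * walsh n E ((1 + u) ^ d * \<alpha>))"
  let ?q = "int (card (UNIV :: 'a set))"
  let ?k = "int (card E)"
  have NB: "N_count B (1 + u) u 1 = ?N u" for u :: 'a
    using N_transfer[OF q hE d0 hd, of "1 + u" u 1] N_swap[of E "(1 + u) ^ d" "u ^ d" 1] by simp
  have P14: "is_3_design (UNIV :: 'a set) (GA1_orbit B) \<longleftrightarrow> (\<exists>c. \<forall>u. ?P u \<longrightarrow> ?N u = c)"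
    unfolding design_iff[OF q, of B] NB by (rule refl)
  have P24: "(\<exists>c. \<forall>u. ?P u \<longrightarrow> ?S2 u = c) \<longleftrightarrow> (\<exists>c. \<forall>u. ?P u \<longrightarrow> ?N u = c)"
  proof (rule inj_const[where g = "\<lambda>N. ?q ^ 2 - 6 * ?q * ?k + 12 * ?k ^ 2 - 8 * int N"])
    show "\<forall>u. ?P u \<longrightarrow> ?S2 u = ?q ^ 2 - 6 * ?q * ?k + 12 * ?k ^ 2 - 8 * int (?N u)"
    proof (intro allI impI)
      fix u :: 'a assume u: "?P u"
      show "?S2 u = ?q ^ 2 - 6 * ?q * ?k + 12 * ?k ^ 2 - 8 * int (?N u)"
        by (rule sum2_formula[OF q]) (use nz[OF u] in auto)
    qed
    show "inj (\<lambda>N. ?q ^ 2 - 6 * ?q * ?k + 12 * ?k ^ 2 - 8 * int N)"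
      by (rule injI) simp
  qed
  have P34: "(\<exists>c. \<forall>u. ?P u \<longrightarrow> ?S3 u = c) \<longleftrightarrow> (\<exists>c. \<forall>u. ?P u \<longrightarrow> ?N u = c)"
  proof (rule inj_const[where g = "\<lambda>N. (?q - 2 * ?k) ^ 3 - 8 * (?q * int N - ?k ^ 3)"])
    show "\<forall>u. ?P u \<longrightarrow> ?S3 u = (?q - 2 * ?k) ^ 3 - 8 * (?q * int (?N u) - ?k ^ 3)"
    proof (intro allI impI)
      fix u :: 'a assume u: "?P u"
      show "?S3 u = (?q - 2 * ?k) ^ 3 - 8 * (?q * int (?N u) - ?k ^ 3)"
        by (rule sum3_formula[OF q]) (use nz[OF u] in auto)
    qed
    have "?q > 0" using card_ge2[OF q] by simp
    then show "inj (\<lambda>N. (?q - 2 * ?k) ^ 3 - 8 * (?q * int N - ?k ^ 3))"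
      by (intro injI) simp
  qed
  show ?thesis unfolding P14 P24 P34 by simp
qed

end
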